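(* For $\alpha>0$ set $$H_\alpha(t)=\frac\alpha2\operatorname{sinc}^2\!\left(\frac{\alpha t}{2}\right)+\frac\alpha4\left[\operatorname{sinc}^2\!\left(\frac{\alpha t-\pi}{2}\right)+\operatorname{sinc}^2\!\left(\frac{\alpha t+\pi}{2}\right)\right]$$ and $G_\alpha(x)=\frac1\pi\int_0^\infty H_\alpha(t)\cos(tx)\,dt$ for $x\ge0$. Then $G_\alpha$ is supported on $[0,\alpha]$, $G_\alpha(0)=1$, and $H_\alpha(t)\ge\frac{2\alpha}{\max((\alpha t)^2,\pi^2/3)}$ for all $t\in\mathbb{R}$.
   Context: $\operatorname{sinc}(x)=\frac{\sin x}{x}$ for $x\ne0$ and $\operatorname{sinc}(0)=1$. *)

theory Defs
  imports "HOL-Analysis.Analysis"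
begin

definition sinc :: "real \<Rightarrow> real" where
  "sinc x = (if x = 0 then 1 else sin x / x)"

definition H :: "real \<Rightarrow> real \<Rightarrow> real" where
  "H \<alpha> t = \<alpha> / 2 * (sinc (\<alpha> * t / 2))\<^sup>2
     + \<alpha> / 4 * ((sinc ((\<alpha> * t - pi) / 2))\<^sup>2 + (sinc ((\<alpha> * t + pi) / 2))\<^sup>2)"

definition G :: "real \<Rightarrow> real \<Rightarrow> real" where
  "G \<alpha> x = 1 / pi * integral {0..} (\<lambda>t. H \<alpha> t * cos (t * x))"

end

theory Submission
  imports Defs "HOL-Probability.Sinc_Integral"
begin


lemma sin_lower3: assumes "0 \<le> x" "x \<le> pi" shows "x - x^3/6 \<le> sin x"
proof (cases "x = 0")
  case True then show ?thesis by simp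
next
  case False
  then have "0 < x" using assms by simp
  from Maclaurin_sin_expansion4[OF this, of 4] obtain t where
    t: "0 < t" "t \<le> x" "sin x = (\<Sum>m<4. sin_coeff m * x ^ m) + (sin (t + 1/2 * real 4 * pi) / fact 4) * x ^ 4"
    by blast
  have s: "(\<Sum>m<4. sin_coeff m * x ^ m) = x - x^3/6"
    by (simp add: lessThan_nat_numeral sin_coeff_def fact_numeral)
  have "sin (t + 1/2 * real 4 * pi) = sin t"
  proof -
    have "t + 1/2 * real 4 * pi = t + 2 * pi" by simp
    then show ?thesis by (simp add: sin_add)
  qed
  moreover have "sin t \<ge> 0" using t assms by (intro sin_ge_zero) auto
  ultimately have "(sin (t + 1/2 * real 4 * pi) / fact 4) * x ^ 4 \<ge> 0" by simp
  then show ?thesis using t(3) s by linarith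
qed

lemma pisq_ge: "9 \<le> pi^2" "pi^2 \<le> 16"
proof -
  have "3 \<le> pi" using pi_gt3 by simp
  then have "3 * 3 \<le> pi * pi" by (intro mult_mono) auto
  then show "9 \<le> pi^2" by (simp add: power2_eq_square)
  have "pi \<le> 4" using pi_less_4 by simp
  then have "pi * pi \<le> 4 * 4" using pi_gt_zero by (intro mult_mono) auto
  then show "pi^2 \<le> 16" by (simp add: power2_eq_square)
qed

lemma sinc_eq: "x \<noteq> 0 \<Longrightarrow> Defs.sinc x = sin x / x" by (simp add: sinc_def)

lemma shifted_sum:
  fixes u c :: real
  assumes "u \<noteq> c" "u \<noteq> -c"
  shows "(1/(u-c)^2 + 1/(u+c)^2)/2 = (u^2+c^2)/(u^2-c^2)^2"
proof -
  have a: "u - c \<noteq> 0" "u + c \<noteq> 0" using assms by auto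
  have e: "(u^2 - c^2)^2 = (u-c)^2 * (u+c)^2" by (simp add: power2_eq_square algebra_simps)
  have n: "(u+c)^2 + (u-c)^2 = 2 * (u^2+c^2)" by (simp add: power2_eq_square algebra_simps)
  have "(1/(u-c)^2 + 1/(u+c)^2)/2 = ((u+c)^2 + (u-c)^2)/(2 * ((u-c)^2 * (u+c)^2))"
    using a by (simp add: field_simps)
  also have "\<dots> = (u^2+c^2)/(u^2-c^2)^2" unfolding n e by (rule mult_divide_mult_cancel_left) simp
  finally show ?thesis .
qed

lemma case_big:
  fixes u c :: real
  assumes "c > 0" "3 * u^2 \<ge> c^2" "u^2 \<noteq> c^2"
  shows "1/u^2 \<le> (u^2+c^2)/(u^2-c^2)^2"
proof -
  have u: "u^2 > 0" using assms by (smt (verit) power2_less_0 zero_less_power2)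
  have d: "(u^2-c^2)^2 > 0" using assms by simp
  have "(u^2-c^2)^2 \<le> u^2 * (u^2+c^2)"
  proof -
    have "(u^2-c^2)^2 = u^2 * u^2 - 2 * u^2 * c^2 + c^2 * c^2" by (simp add: power2_eq_square algebra_simps)
    moreover have "c^2 * c^2 \<le> 3 * u^2 * c^2" using assms by (intro mult_right_mono) auto
    ultimately show ?thesis by (simp add: algebra_simps)
  qed
  then show ?thesis using u d by (simp add: divide_simps) (simp add: algebra_simps)
qed

lemma case_small:
  fixes v W s :: real
  assumes v: "0 < v" "3 * v \<le> W" and W: "9/4 \<le> W" "W \<le> 4"
    and s: "v * (1-v/6)^2 \<le> s"
  shows "3/W \<le> s/v + (1-s) * ((v+W)/(W-v)^2)"
proof -
  define g where "g = (v+W)/(W-v)^2"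
  have wv: "W - v > 0" using v W by linarith
  have nz: "(W-v)^2 \<noteq> 0" using wv by simp
  have g1: "1/v - g = W * (W-3 * v)/(v * (W-v)^2)"
  proof -
    have "1/v - g = ((W-v)^2 - v * (v+W))/(v * (W-v)^2)"
      using nz v unfolding g_def by (simp add: field_simps)
    also have "(W-v)^2 - v * (v+W) = W * (W-3 * v)" by (simp add: power2_eq_square algebra_simps)
    finally show ?thesis .
  qed
  have g1nn: "1/v - g \<ge> 0" unfolding g1 using v wv by (intro divide_nonneg_pos mult_nonneg_nonneg) auto
  have "s/v + (1-s) * g = g + s * (1/v - g)" by (simp add: field_simps)
  also have "\<dots> \<ge> g + v * (1-v/6)^2 * (1/v-g)"
    using mult_right_mono[OF s g1nn] by linarith
  finally have A: "s/v + (1-s) * g \<ge> g + v * (1-v/6)^2 * (1/v-g)" .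
  have B: "g + v * (1-v/6)^2 * (1/v-g) = (v + W + (1-v/6)^2 * W * (W-3 * v))/(W-v)^2"
  proof -
    have "v * (1-v/6)^2 * (1/v-g) = ((1-v/6)^2 * W * (W-3 * v))/(W-v)^2"
      unfolding g1 using v nz by (simp add: field_simps)
    then show ?thesis unfolding g_def by (simp add: add_divide_distrib)
  qed
  have Q: "W^2 * (1-v/6)^2 - 2 * W + v \<ge> 0"
  proof -
    have "(1-v/6)^2 \<ge> 1 - v/3" by (simp add: power2_eq_square algebra_simps)
    then have "W^2 * (1-v/6)^2 \<ge> W^2 * (1-v/3)" by (intro mult_left_mono) auto
    moreover have "W^2 * (1-v/3) - 2 * W + v \<ge> 0"
    proof -
      have "W^2 * (1-v/3) - 2 * W + v = W^2 - 2 * W + v * (1 - W^2/3)" by (simp add: algebra_simps)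
      moreover have "v * (1 - W^2/3) \<ge> (W/3) * (1-W^2/3)"
      proof -
        have "(9/4) * (9/4) \<le> W * W" using W by (intro mult_mono) auto
        then have "1 - W^2/3 \<le> 0" by (simp add: power2_eq_square)
        then show ?thesis using v by (intro mult_right_mono_neg) auto
      qed
      moreover have "W^2 - 2 * W + (W/3) * (1-W^2/3) \<ge> 0"
      proof -
        have "W^2 - 2 * W + (W/3) * (1-W^2/3) = W * (W - 5/3 - W^2/9)" by (simp add: algebra_simps power2_eq_square)
        moreover have "W - 5/3 - W^2/9 \<ge> 0"
        proof -
          have "W - 5/3 - W^2/9 = (W - 9/4) * (4 - W)/9 + (11 * W/36 - 2/3)" by (simp add: field_simps power2_eq_square)
          moreover have "(W - 9/4) * (4 - W) \<ge> 0" using W by simp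
          ultimately show ?thesis using W by linarith
        qed
        ultimately show ?thesis using W by simp
      qed
      ultimately show ?thesis by linarith
    qed
    ultimately show ?thesis by linarith
  qed
  have C: "3 * (W-v)^2 \<le> W * (v + W + (1-v/6)^2 * W * (W-3 * v))"
  proof -
    have "W * (v + W + (1-v/6)^2 * W * (W-3 * v)) - 3 * (W-v)^2 = (W-3 * v) * (W^2 * (1-v/6)^2 - 2 * W + v)"
      by (simp add: algebra_simps power2_eq_square)
    moreover have "(W-3 * v) * (W^2 * (1-v/6)^2 - 2 * W + v) \<ge> 0" using Q v by simp
    ultimately show ?thesis by linarith
  qed
  have "3/W \<le> (v + W + (1-v/6)^2 * W * (W-3 * v))/(W-v)^2"
    using C wv W by (simp add: divide_simps) (simp add: algebra_simps)
  then show ?thesis using A B unfolding g_def by linarith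
qed

lemma B_bound:
  fixes u :: real
  shows "4 / max (4 * u^2) (pi^2/3) \<le>
     (Defs.sinc u)^2 + ((Defs.sinc (u - pi/2))^2 + (Defs.sinc (u + pi/2))^2)/2"
proof -
  define c where "c = pi/2"
  have c0: "c > 0" unfolding c_def by simp
  have pisq: "9 \<le> pi^2" "pi^2 \<le> 16" by (rule pisq_ge)+
  have csq: "c^2 = pi^2/4" unfolding c_def by (simp add: power_divide)
  have nn: "0 \<le> ((Defs.sinc (u - pi/2))^2 + (Defs.sinc (u + pi/2))^2)/2" by simp
  consider "u = 0" | "u = c \<or> u = -c" | "u \<noteq> 0" "u \<noteq> c" "u \<noteq> -c" by blast
  then show ?thesis
  proof cases
    case 1
    have s1: "Defs.sinc (- (pi/2)) = 2/pi" "Defs.sinc (pi/2) = 2/pi"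
      by (simp_all add: sinc_def)
    have m: "max (4 * u^2) (pi^2/3) = pi^2/3" using 1 by simp
    have "4 / (pi^2/3) \<le> 1 + ((2/pi)^2 + (2/pi)^2)/2"
      using pisq by (simp add: field_simps power2_eq_square)
    then show ?thesis using 1 s1 m by (simp add: sinc_def)
  next
    case 2
    then have u2: "u^2 = c^2" by auto
    have s1: "(sin u)^2 = 1"
    proof -
      from 2 have "u = pi/2 \<or> u = -(pi/2)" by (simp add: c_def)
      then show ?thesis by (metis power2_minus sin_minus sin_pi_half one_power2)
    qed
    have su: "(Defs.sinc u)^2 = 1/c^2"
      using 2 c0 s1 u2 by (auto simp: sinc_def power_divide)
    have "4 / max (4 * u^2) (pi^2/3) \<le> 4 / (4 * u^2)"
      using c0 u2 by (intro divide_left_mono) (auto intro!: mult_pos_pos simp: less_max_iff_disj)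
    also have "\<dots> = 1/c^2" using u2 c0 by simp
    finally show ?thesis using su nn by linarith
  next
    case 3
    have sm: "Defs.sinc (u - pi/2) = - cos u / (u - c)"
      using 3 by (simp add: sinc_def c_def sin_diff)
    have sp: "Defs.sinc (u + pi/2) = cos u / (u + c)"
      using 3 by (auto simp add: sinc_def c_def sin_add)
    have su: "Defs.sinc u = sin u / u" using 3 by (simp add: sinc_def)
    have Beq: "(Defs.sinc u)^2 + ((Defs.sinc (u - pi/2))^2 + (Defs.sinc (u + pi/2))^2)/2
        = (sin u)^2/u^2 + (cos u)^2 * ((u^2+c^2)/(u^2-c^2)^2)"
    proof -
      have "((Defs.sinc (u - pi/2))^2 + (Defs.sinc (u + pi/2))^2)/2
            = (cos u)^2 * ((1/(u-c)^2 + 1/(u+c)^2)/2)"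
        unfolding sm sp by (simp add: power_divide field_simps)
      also have "\<dots> = (cos u)^2 * ((u^2+c^2)/(u^2-c^2)^2)"
        using 3 by (simp add: shifted_sum)
      finally show ?thesis unfolding su by (simp add: power_divide)
    qed
    have u2p: "u^2 > 0" using 3 by simp
    show ?thesis
    proof (cases "3 * u^2 \<ge> c^2")
      case True
      have uc: "u^2 \<noteq> c^2"
      proof
        assume "u^2 = c^2"
        then have "u = c \<or> u = -c" using c0 by (metis power2_eq_iff)
        then show False using 3 by auto
      qed
      have m: "max (4 * u^2) (pi^2/3) = 4 * u^2" using True csq by simp
      have g: "1/u^2 \<le> (u^2+c^2)/(u^2-c^2)^2" by (rule case_big[OF c0 True uc])
      have "(sin u)^2/u^2 + (cos u)^2 * (1/u^2) \<le> (sin u)^2/u^2 + (cos u)^2 * ((u^2+c^2)/(u^2-c^2)^2)"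
        using g by (intro add_left_mono mult_left_mono) auto
      moreover have "(sin u)^2/u^2 + (cos u)^2 * (1/u^2) = 1/u^2"
        by (simp add: add_divide_distrib[symmetric])
      ultimately show ?thesis unfolding Beq m using u2p by simp
    next
      case False
      have m: "max (4 * u^2) (pi^2/3) = pi^2/3" using False csq by simp
      have W: "9/4 \<le> c^2" "c^2 \<le> 4" using csq pisq by auto
      have v: "0 < u^2" "3 * u^2 \<le> c^2" using False u2p by auto
      have au: "\<bar>u\<bar> \<le> 2"
      proof -
        have "u^2 \<le> 2^2" using v W by simp
        then show ?thesis by (metis abs_le_square_iff abs_numeral)
      qed
      have slow: "\<bar>u\<bar> - \<bar>u\<bar>^3/6 \<le> sin \<bar>u\<bar>"
        using au pi_gt3 by (intro sin_lower3) auto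
      have pos: "0 \<le> \<bar>u\<bar> - \<bar>u\<bar>^3/6"
      proof -
        have "u^2 \<le> 6" using v W by simp
        then have "\<bar>u\<bar> * u^2 \<le> \<bar>u\<bar> * 6" by (intro mult_left_mono) auto
        moreover have "\<bar>u\<bar>^3 = \<bar>u\<bar> * u^2" by (simp add: power3_eq_cube power2_eq_square)
        ultimately show ?thesis by simp
      qed
      have "(\<bar>u\<bar> - \<bar>u\<bar>^3/6)^2 \<le> (sin \<bar>u\<bar>)^2"
        using slow pos by (intro power_mono) auto
      moreover have "(\<bar>u\<bar> - \<bar>u\<bar>^3/6)^2 = u^2 * (1 - u^2/6)^2"
        by (simp add: power2_eq_square power3_eq_cube algebra_simps)
      moreover have "(sin \<bar>u\<bar>)^2 = (sin u)^2"
        by (cases "u \<ge> 0") auto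
      ultimately have s: "u^2 * (1 - u^2/6)^2 \<le> (sin u)^2" by simp
      have "3/c^2 \<le> (sin u)^2/u^2 + (1 - (sin u)^2) * ((u^2+c^2)/(c^2-u^2)^2)"
        by (rule case_small[OF v W s])
      moreover have "(c^2-u^2)^2 = (u^2-c^2)^2" by (simp add: power2_commute)
      moreover have "1 - (sin u)^2 = (cos u)^2" by (simp add: cos_squared_eq)
      moreover have "4/(pi^2/3) = 3/c^2" unfolding csq by (simp add: field_simps)
      ultimately show ?thesis unfolding Beq m by (simp add: add.commute)
    qed
  qed
qed

lemma H_bound:
  fixes \<alpha> t :: real assumes "\<alpha> > 0"
  shows "H \<alpha> t \<ge> 2 * \<alpha> / max ((\<alpha> * t)\<^sup>2) (pi\<^sup>2 / 3)"
proof -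
  define u where "u = \<alpha> * t / 2"
  have e1: "(\<alpha> * t - pi) / 2 = u - pi/2" "(\<alpha> * t + pi) / 2 = u + pi/2" "(\<alpha> * t)^2 = 4 * u^2"
    unfolding u_def by (simp_all add: field_simps power2_eq_square)
  have Heq: "H \<alpha> t = \<alpha>/2 * ((Defs.sinc u)^2 + ((Defs.sinc (u - pi/2))^2 + (Defs.sinc (u + pi/2))^2)/2)"
    unfolding H_def e1(1,2) u_def[symmetric] by (simp add: field_simps)
  have "2 * \<alpha> / max ((\<alpha> * t)\<^sup>2) (pi\<^sup>2 / 3) = \<alpha>/2 * (4 / max (4 * u^2) (pi^2/3))"
    by (simp add: e1(3))
  also have "\<dots> \<le> \<alpha>/2 * ((Defs.sinc u)^2 + ((Defs.sinc (u - pi/2))^2 + (Defs.sinc (u + pi/2))^2)/2)"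
    using assms B_bound by (intro mult_left_mono) auto
  also have "\<dots> = H \<alpha> t" using Heq by simp
  finally show ?thesis .
qed



lemma sinc_fun: "Defs.sinc = (\<lambda>x. if x = 0 then 1 else sin x / x)"
  by (rule ext) (simp add: Defs.sinc_def)

lemma isCont_Dsinc: "isCont Defs.sinc x"
  unfolding sinc_fun by (rule isCont_sinc)

lemma continuous_on_Dsinc[continuous_intros]:
  "continuous_on S f \<Longrightarrow> continuous_on S (\<lambda>x. Defs.sinc (f x))"
  by (rule continuous_on_compose2[OF continuous_at_imp_continuous_on[of UNIV] _ subset_UNIV])
     (auto intro: isCont_Dsinc)

lemma Dsinc_neg[simp]: "Defs.sinc (- x) = Defs.sinc x"
  by (simp add: Defs.sinc_def)

definition DD :: "real \<Rightarrow> real \<Rightarrow> real" where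
  "DD k s = k^2/2 * (Defs.sinc (k * s / 2))^2"

lemma DD_cont[continuous_intros]: "continuous_on S (DD k)"
  unfolding DD_def by (intro continuous_intros) auto

lemma DD_nonneg: "DD k s \<ge> 0" unfolding DD_def by simp

lemma DD_even: "DD k (- s) = DD k s" "DD (-k) s = DD k s"
  unfolding DD_def by (simp_all add: minus_divide_left[symmetric])

lemma DD_eq: assumes "s \<noteq> 0" shows "DD k s = (1 - cos (k * s)) / s^2"
proof (cases "k = 0")
  case True then show ?thesis by (simp add: DD_def)
next
  case False
  have ne: "k * s / 2 \<noteq> 0" using False assms by simp
  have c: "cos (k * s) = 1 - 2 * (sin (k * s / 2))^2"
    using cos_double_sin[of "k * s / 2"] by simp
  show ?thesis unfolding DD_def c using ne False assms
    by (simp add: Defs.sinc_def power_divide field_simps)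
qed

lemma DD_at0: "DD k 0 = k^2/2" by (simp add: DD_def Defs.sinc_def)

lemma DD_half_pos:
  assumes k: "k > 0"
  shows "(DD k has_integral (pi * k / 2)) {0..}"
proof -
  define F where "F y = k * Si (k * y) - y * DD k y" for y
  have F0: "F 0 = 0" by (simp add: F_def Si_def zero_ereal_def[symmetric])
  have derF: "(F has_real_derivative DD k y) (at y)" if y: "y > 0" for y
  proof -
    define G where "G y = k * Si (k * y) - (1 - cos (k * y)) / y" for y
    have dS: "((\<lambda>y. Si (k * y)) has_real_derivative
        (if k * y = 0 then 1 else sin (k * y) / (k * y)) * k) (at y)"
      by (rule DERIV_chain2[OF DERIV_Si]) (auto intro!: derivative_eq_intros)
    have d1: "((\<lambda>y. 1 - cos (k * y)) has_real_derivative k * sin (k * y)) (at y)"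
      by (auto intro!: derivative_eq_intros)
    have dQ: "((\<lambda>y. (1 - cos (k * y)) / y) has_real_derivative
        (k * sin (k * y) * y - (1 - cos (k * y)) * 1) / (y * y)) (at y)"
      using y by (intro DERIV_divide[OF d1 DERIV_ident]) auto
    have "(G has_real_derivative
        k * ((if k * y = 0 then 1 else sin (k * y) / (k * y)) * k)
        - (k * sin (k * y) * y - (1 - cos (k * y)) * 1) / (y * y)) (at y)"
      unfolding G_def by (rule DERIV_diff[OF DERIV_cmult[OF dS] dQ])
    moreover have "k * ((if k * y = 0 then 1 else sin (k * y) / (k * y)) * k)
        - (k * sin (k * y) * y - (1 - cos (k * y)) * 1) / (y * y) = DD k y"
    proof -
      have a: "k * ((if k * y = 0 then 1 else sin (k * y) / (k * y)) * k) = k * sin (k * y) / y"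
        using y k by simp
      have b: "(k * sin (k * y) * y - (1 - cos (k * y)) * 1) / (y * y)
          = k * sin (k * y) / y - (1 - cos (k * y)) / (y * y)"
        using y by (simp add: diff_divide_distrib)
      show ?thesis unfolding a b using y by (simp add: DD_eq power2_eq_square)
    qed
    ultimately have "(G has_real_derivative DD k y) (at y)" by simp
    then show ?thesis
    proof (rule has_field_derivative_transform_within_open[where S="{0<..}"])
      show "open {0::real<..}" by simp
      show "y \<in> {0<..}" using y by simp
      fix z :: real assume "z \<in> {0<..}"
      then show "G z = F z" unfolding G_def F_def using DD_eq[of z k] by (simp add: power2_eq_square)
    qed
  qed
  have cSi: "continuous_on S (\<lambda>y. Si (k * y))" for S
    by (rule continuous_on_compose2[of UNIV Si])
       (auto intro!: continuous_at_imp_continuous_on isCont_Si continuous_intros)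
  have contF: "continuous_on S F" for S
    unfolding F_def by (intro continuous_intros cSi)
  have int_eq: "integral {0..y} (DD k) = F y" if "y \<ge> 0" for y
  proof -
    have "(DD k has_integral (F y - F 0)) {0..y}"
      using that by (intro fundamental_theorem_of_calculus_interior contF)
        (auto simp: has_real_derivative_iff_has_vector_derivative[symmetric] intro!: derF)
    then show ?thesis using F0 by (simp add: integral_unique)
  qed
  have lim1: "((\<lambda>y. k * Si (k * y)) \<longlongrightarrow> k * (pi/2)) at_top"
  proof -
    have "filterlim (\<lambda>y. k * y) at_top at_top"
      by (rule filterlim_tendsto_pos_mult_at_top[OF tendsto_const k filterlim_ident])
    from filterlim_compose[OF Si_at_top this] show ?thesis by (intro tendsto_intros)
  qed
  have lim2: "((\<lambda>y. y * DD k y) \<longlongrightarrow> 0) at_top"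
  proof (rule Lim_null_comparison)
    show "\<forall>\<^sub>F y in at_top. norm (y * DD k y) \<le> 2 / y"
    proof (rule eventually_mono[OF eventually_gt_at_top[of 0]])
      fix y :: real assume y: "0 < y"
      have "y * DD k y = (1 - cos (k * y)) / y" using y by (simp add: DD_eq power2_eq_square)
      moreover have "\<bar>1 - cos (k * y)\<bar> \<le> 2" by (smt (verit) cos_ge_minus_one cos_le_one)
      ultimately show "norm (y * DD k y) \<le> 2 / y" using y by (simp add: abs_div divide_right_mono)
    qed
    show "((\<lambda>y::real. 2 / y) \<longlongrightarrow> 0) at_top"
      by (intro tendsto_divide_0[OF tendsto_const] filterlim_at_top_imp_at_infinity filterlim_ident)
  qed
  have limF: "(F \<longlongrightarrow> pi * k / 2) at_top"
  proof -
    have "((\<lambda>y. k * Si (k * y) - y * DD k y) \<longlongrightarrow> k * (pi/2) - 0) at_top"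
      by (intro tendsto_diff lim1 lim2)
    then show ?thesis unfolding F_def[abs_def] by (simp add: mult.commute)
  qed
  show ?thesis
  proof (rule has_integral_to_inf)
    show "DD k integrable_on {0..y}" for y by (intro integrable_continuous_real DD_cont)
    show "((\<lambda>y. integral {0..y} (DD k)) \<longlongrightarrow> pi * k / 2) at_top"
      using limF by (rule Lim_transform_eventually)
        (auto intro: eventually_mono[OF eventually_ge_at_top[of 0]] simp: int_eq)
    show "0 \<le> DD k y" for y by (rule DD_nonneg)
  qed
qed

lemma DD_half: "(DD k has_integral (pi * \<bar>k\<bar> / 2)) {0..}"
proof -
  consider "k = 0" | "k > 0" | "k < 0" by linarith
  then show ?thesis
  proof cases
    case 1
    have "DD k = (\<lambda>_. 0)" using 1 by (simp add: DD_def fun_eq_iff)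
    then show ?thesis using 1 by simp
  next
    case 2 then show ?thesis using DD_half_pos[of k] by simp
  next
    case 3
    have "DD k = DD (-k)" by (simp add: DD_even fun_eq_iff)
    then show ?thesis using 3 DD_half_pos[of "-k"] by simp
  qed
qed

lemma cont_borel: "continuous_on UNIV f \<Longrightarrow> (f::real\<Rightarrow>real) \<in> borel_measurable borel"
  by (rule borel_measurable_continuous_onI)

lemma reflect_lborel:
  fixes g :: "real \<Rightarrow> real"
  assumes "integrable lborel g"
  shows "integrable lborel (\<lambda>x. g (- x))" "integral\<^sup>L lborel (\<lambda>x. g (- x)) = integral\<^sup>L lborel g"
proof -
  show "integrable lborel (\<lambda>x. g (- x))"
    using lborel_integrable_real_affine[OF assms, of "-1" 0] by simp
  show "integral\<^sup>L lborel (\<lambda>x. g (- x)) = integral\<^sup>L lborel g"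
    using lborel_integral_real_affine[of "-1" g 0] by simp
qed

lemma shift_lborel:
  fixes g :: "real \<Rightarrow> real"
  assumes "integrable lborel g"
  shows "integrable lborel (\<lambda>x. g (x + c))" "integral\<^sup>L lborel (\<lambda>x. g (x + c)) = integral\<^sup>L lborel g"
proof -
  show "integrable lborel (\<lambda>x. g (x + c))"
    using lborel_integrable_real_affine[OF assms, of 1 c] by (simp add: add.commute)
  show "integral\<^sup>L lborel (\<lambda>x. g (x + c)) = integral\<^sup>L lborel g"
    using lborel_integral_real_affine[of 1 g c] by (simp add: add.commute)
qed

lemma odd_zero:
  fixes f :: "real \<Rightarrow> real"
  assumes "integrable lborel f" "\<And>x. f (- x) = - f x"
  shows "integral\<^sup>L lborel f = 0"
proof -
  have "integral\<^sup>L lborel f = integral\<^sup>L lborel (\<lambda>x. f (- x))" using reflect_lborel(2)[OF assms(1)] by simp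
  also have "\<dots> = - integral\<^sup>L lborel f" by (simp add: assms(2))
  finally show ?thesis by simp
qed

lemma split_AE:
  fixes f :: "real \<Rightarrow> real"
  assumes even: "\<And>x. f (- x) = f x"
  shows "AE x in lborel. f x = indicator {0..} x * f x + indicator {0..} (- x) * f (- x)"
  using AE_lborel_singleton[of 0] by eventually_elim (auto simp: indicator_def even)

lemma even_full:
  fixes f :: "real \<Rightarrow> real"
  assumes cont: "continuous_on UNIV f" and even: "\<And>x. f (- x) = f x"
    and nn: "\<And>x. f x \<ge> 0" and hi: "(f has_integral I) {0..}"
  shows "integrable lborel f" "integral\<^sup>L lborel f = 2 * I"
proof -
  define g where "g x = indicator {0..} x * f x" for x
  have fb[measurable]: "f \<in> borel_measurable borel" using cont by (rule cont_borel)
  have gb[measurable]: "g \<in> borel_measurable borel" unfolding g_def by measurable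
  have gI: "(g has_integral I) UNIV"
  proof -
    have *: "g = (\<lambda>x. if x \<in> {0..} then f x else 0)" by (auto simp: g_def fun_eq_iff indicator_def)
    show ?thesis unfolding * has_integral_restrict_UNIV by (rule hi)
  qed
  have gnn: "g x \<ge> 0" for x using nn by (simp add: g_def)
  have "integral\<^sup>N lborel g = I" by (rule nn_integral_has_integral_lborel[OF gb gnn gI])
  then have gint: "integrable lborel g"
    by (intro integrableI_nn_integral_finite[where x=I]) (auto simp: gnn)
  have gval: "integral\<^sup>L lborel g = I"
    using has_integral_integral_lborel[OF gint] gI by (rule has_integral_unique)
  have hint: "integrable lborel (\<lambda>x. g (- x))" and hval: "integral\<^sup>L lborel (\<lambda>x. g (- x)) = I"
    using reflect_lborel[OF gint] gval by auto
  have AEe: "AE x in lborel. f x = g x + g (- x)"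
    using split_AE[of f, OF even] by (simp add: g_def)
  have sint: "integrable lborel (\<lambda>x. g x + g (- x))" using gint hint by simp
  show "integrable lborel f"
    by (rule integrable_cong_AE_imp[OF sint]) (use AEe in \<open>auto elim: AE_mp\<close>)
  have "integral\<^sup>L lborel f = integral\<^sup>L lborel (\<lambda>x. g x + g (- x))"
    by (rule integral_cong_AE) (use AEe in auto)
  also have "\<dots> = 2 * I" using gint hint gval hval by simp
  finally show "integral\<^sup>L lborel f = 2 * I" .
qed

lemma half_of_full:
  fixes f :: "real \<Rightarrow> real"
  assumes cont: "continuous_on UNIV f" and even: "\<And>x. f (- x) = f x"
    and fi: "integrable lborel f"
  shows "(f has_integral (integral\<^sup>L lborel f / 2)) {0..}"
proof -
  define g where "g x = f x * indicator {0..} x" for x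
  have fb[measurable]: "f \<in> borel_measurable borel" using cont by (rule cont_borel)
  have gb[measurable]: "g \<in> borel_measurable borel" unfolding g_def by measurable
  have gint: "integrable lborel g" unfolding g_def by (rule integrable_real_mult_indicator) (auto intro: fi)
  have hint: "integrable lborel (\<lambda>x. g (- x))" and hval: "integral\<^sup>L lborel (\<lambda>x. g (- x)) = integral\<^sup>L lborel g"
    using reflect_lborel[OF gint] by auto
  have AEe: "AE x in lborel. f x = g x + g (- x)"
    using split_AE[of f, OF even] by (simp add: g_def mult.commute)
  have "integral\<^sup>L lborel f = integral\<^sup>L lborel (\<lambda>x. g x + g (- x))"
    by (rule integral_cong_AE) (use AEe in auto)
  also have "\<dots> = 2 * integral\<^sup>L lborel g" using gint hint hval by simp
  finally have e: "integral\<^sup>L lborel g = integral\<^sup>L lborel f / 2" by simp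
  have *: "g = (\<lambda>x. if x \<in> {0..} then f x else 0)" by (auto simp: g_def fun_eq_iff indicator_def)
  have "(g has_integral integral\<^sup>L lborel g) UNIV" by (rule has_integral_integral_lborel[OF gint])
  then have "(f has_integral integral\<^sup>L lborel g) {0..}" unfolding * has_integral_restrict_UNIV .
  then show ?thesis using e by simp
qed

lemma DD_full: "integrable lborel (DD k)" "integral\<^sup>L lborel (DD k) = pi * \<bar>k\<bar>"
  using even_full[OF DD_cont DD_even(1) DD_nonneg DD_half] by auto

definition SS :: "real \<Rightarrow> real \<Rightarrow> real" where
  "SS a s = (Defs.sinc (a * s / 2))^2"

definition VV :: "real \<Rightarrow> real \<Rightarrow> real" where
  "VV a x = 4 / a^2 * (- (pi * \<bar>x\<bar>) / 2 + pi * \<bar>x + a\<bar> / 4 + pi * \<bar>x - a\<bar> / 4)"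

lemma SS_cont[continuous_intros]: "continuous_on S (SS a)"
  unfolding SS_def by (intro continuous_intros) auto

lemma SS_cos_eq:
  assumes a: "a > 0"
  shows "SS a s * cos (s * x) = 4 / a^2 * (- DD x s / 2 + DD (x + a) s / 4 + DD (x - a) s / 4)"
proof (cases "s = 0")
  case True
  have "4 / a^2 * (- (x^2/2) / 2 + ((x + a)^2/2) / 4 + ((x - a)^2/2) / 4) = 1"
    using a by (simp add: field_simps power2_eq_square)
  moreover have "SS a s * cos (s * x) = 1" using True by (simp add: SS_def Defs.sinc_def)
  moreover have "4 / a^2 * (- DD x s / 2 + DD (x + a) s / 4 + DD (x - a) s / 4)
     = 4 / a^2 * (- (x^2/2) / 2 + ((x + a)^2/2) / 4 + ((x - a)^2/2) / 4)"
    using True by (simp only: DD_at0)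
  ultimately show ?thesis by linarith
next
  case False
  have ne: "a * s / 2 \<noteq> 0" using a False by simp
  have c: "cos (a * s) = 1 - 2 * (sin (a * s / 2))^2"
    using cos_double_sin[of "a * s / 2"] by simp
  have "(x + a) * s = s * x + a * s" "(x - a) * s = s * x - a * s" by (simp_all add: algebra_simps)
  then have c1: "cos ((x + a) * s) = cos (s * x) * cos (a * s) - sin (s * x) * sin (a * s)"
    and c2: "cos ((x - a) * s) = cos (s * x) * cos (a * s) + sin (s * x) * sin (a * s)"
    by (simp_all only: cos_add cos_diff)
  have num: "- (1 - cos (x * s)) / 2 + (1 - cos ((x + a) * s)) / 4 + (1 - cos ((x - a) * s)) / 4
      = cos (s * x) * (sin (a * s / 2))^2"
    unfolding c1 c2 c apply (simp add: mult.commute[of x s] algebra_simps) by (simp add: field_simps)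
  have "- DD x s / 2 + DD (x + a) s / 4 + DD (x - a) s / 4
      = (- (1 - cos (x * s)) / 2 + (1 - cos ((x + a) * s)) / 4 + (1 - cos ((x - a) * s)) / 4) / s^2"
    unfolding DD_eq[OF False] by (simp add: add_divide_distrib diff_divide_distrib)
  also have "\<dots> = cos (s * x) * (sin (a * s / 2))^2 / s^2" unfolding num ..
  finally have r: "4 / a^2 * (- DD x s / 2 + DD (x + a) s / 4 + DD (x - a) s / 4)
      = 4 / a^2 * (cos (s * x) * (sin (a * s / 2))^2 / s^2)" by simp
  have l: "SS a s = (sin (a * s / 2))^2 / (a * s / 2)^2"
    unfolding SS_def using ne by (simp add: Defs.sinc_def power_divide)
  have sq: "(a * s / 2)^2 = a^2 * s^2 / 4" by (simp add: power2_eq_square)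
  have "SS a s * cos (s * x) = 4 / a^2 * (cos (s * x) * (sin (a * s / 2))^2 / s^2)"
    unfolding l sq using a False by (simp add: field_simps)
  then show ?thesis using r by simp
qed


lemma SS_cos_int:
  assumes a: "a > 0"
  shows "integrable lborel (\<lambda>s. SS a s * cos (s * x))"
    "integral\<^sup>L lborel (\<lambda>s. SS a s * cos (s * x)) = VV a x"
proof -
  have e: "(\<lambda>s. SS a s * cos (s * x)) = (\<lambda>s. 4 / a^2 * (- DD x s / 2 + DD (x + a) s / 4 + DD (x - a) s / 4))"
    using SS_cos_eq[OF a] by auto
  show "integrable lborel (\<lambda>s. SS a s * cos (s * x))" unfolding e
    using DD_full(1) by simp
  show "integral\<^sup>L lborel (\<lambda>s. SS a s * cos (s * x)) = VV a x" unfolding e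
    using DD_full by (simp add: VV_def)
qed

lemma SS_int: "a > 0 \<Longrightarrow> integrable lborel (SS a)"
  using SS_cos_int(1)[of a 0] by simp

lemma SS_sin_int:
  assumes a: "a > 0"
  shows "integrable lborel (\<lambda>s. SS a s * sin (s * x))"
    "integral\<^sup>L lborel (\<lambda>s. SS a s * sin (s * x)) = 0"
proof -
  show i: "integrable lborel (\<lambda>s. SS a s * sin (s * x))"
  proof (rule Bochner_Integration.integrable_bound[OF SS_int[OF a]])
    show "(\<lambda>s. SS a s * sin (s * x)) \<in> borel_measurable lborel"
    proof -
      have "(\<lambda>s. SS a s * sin (s * x)) \<in> borel_measurable borel"
        by (rule cont_borel) (intro continuous_intros)
      then show ?thesis by simp
    qed
    show "AE s in lborel. norm (SS a s * sin (s * x)) \<le> norm (SS a s)"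
      by (auto simp: SS_def abs_mult intro!: mult_left_le)
  qed
  show "integral\<^sup>L lborel (\<lambda>s. SS a s * sin (s * x)) = 0"
    by (rule odd_zero[OF i]) (simp add: SS_def minus_divide_left[symmetric])
qed

lemma H_decomp:
  assumes a: "a > 0"
  shows "H a t = a/2 * SS a t + a/4 * (SS a (t - pi/a) + SS a (t + pi/a))"
proof -
  have "a * (t - pi/a) / 2 = (a * t - pi) / 2" "a * (t + pi/a) / 2 = (a * t + pi) / 2"
    using a by (simp_all add: field_simps)
  then show ?thesis unfolding H_def SS_def by simp
qed

lemma shiftL:
  assumes a: "a > 0"
  shows "integrable lborel (\<lambda>t. SS a (t - c) * cos (t * x))"
    "integral\<^sup>L lborel (\<lambda>t. SS a (t - c) * cos (t * x)) = cos (c * x) * VV a x"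
proof -
  define g where "g s = cos (c * x) * (SS a s * cos (s * x)) - sin (c * x) * (SS a s * sin (s * x))" for s
  have gi: "integrable lborel g" unfolding g_def using SS_cos_int[OF a] SS_sin_int[OF a] by simp
  have gv: "integral\<^sup>L lborel g = cos (c * x) * VV a x"
    unfolding g_def using SS_cos_int[OF a] SS_sin_int[OF a] by simp
  have e: "(\<lambda>t. g (t + - c)) = (\<lambda>t. SS a (t - c) * cos (t * x))"
  proof
    fix t
    have "(t - c) * x + c * x = t * x" by (simp add: algebra_simps)
    then have k: "cos (t * x) = cos ((t - c) * x) * cos (c * x) - sin ((t - c) * x) * sin (c * x)"
      using cos_add[of "(t - c) * x" "c * x"] by simp
    show "g (t + - c) = SS a (t - c) * cos (t * x)"
      unfolding g_def k by (simp add: algebra_simps)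
  qed
  show "integrable lborel (\<lambda>t. SS a (t - c) * cos (t * x))"
    using shift_lborel(1)[OF gi, of "-c"] unfolding e .
  show "integral\<^sup>L lborel (\<lambda>t. SS a (t - c) * cos (t * x)) = cos (c * x) * VV a x"
    using shift_lborel(2)[OF gi, of "-c"] gv unfolding e by simp
qed

lemma shiftR:
  assumes a: "a > 0"
  shows "integrable lborel (\<lambda>t. SS a (t + c) * cos (t * x))"
    "integral\<^sup>L lborel (\<lambda>t. SS a (t + c) * cos (t * x)) = cos (c * x) * VV a x"
proof -
  define g where "g s = cos (c * x) * (SS a s * cos (s * x)) + sin (c * x) * (SS a s * sin (s * x))" for s
  have gi: "integrable lborel g" unfolding g_def using SS_cos_int[OF a] SS_sin_int[OF a] by simp
  have gv: "integral\<^sup>L lborel g = cos (c * x) * VV a x"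
    unfolding g_def using SS_cos_int[OF a] SS_sin_int[OF a] by simp
  have e: "(\<lambda>t. g (t + c)) = (\<lambda>t. SS a (t + c) * cos (t * x))"
  proof
    fix t
    have "(t + c) * x - c * x = t * x" by (simp add: algebra_simps)
    then have k: "cos (t * x) = cos ((t + c) * x) * cos (c * x) + sin ((t + c) * x) * sin (c * x)"
      using cos_diff[of "(t + c) * x" "c * x"] by simp
    show "g (t + c) = SS a (t + c) * cos (t * x)"
      unfolding g_def k by (simp add: algebra_simps)
  qed
  show "integrable lborel (\<lambda>t. SS a (t + c) * cos (t * x))"
    using shift_lborel(1)[OF gi, of c] unfolding e .
  show "integral\<^sup>L lborel (\<lambda>t. SS a (t + c) * cos (t * x)) = cos (c * x) * VV a x"
    using shift_lborel(2)[OF gi, of c] gv unfolding e by simp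
qed

lemma H_cos_half:
  assumes a: "a > 0"
  shows "((\<lambda>t. H a t * cos (t * x)) has_integral
           ((a/2 * VV a x + a/2 * cos (pi / a * x) * VV a x) / 2)) {0..}"
proof -
  define c where "c = pi / a"
  have e: "(\<lambda>t. H a t * cos (t * x)) = (\<lambda>t. a/2 * (SS a t * cos (t * x))
       + a/4 * (SS a (t - c) * cos (t * x)) + a/4 * (SS a (t + c) * cos (t * x)))"
    unfolding c_def using H_decomp[OF a] by (simp add: fun_eq_iff algebra_simps)
  have fi: "integrable lborel (\<lambda>t. H a t * cos (t * x))"
    unfolding e using SS_cos_int[OF a] shiftL[OF a] shiftR[OF a] by simp
  have fv: "integral\<^sup>L lborel (\<lambda>t. H a t * cos (t * x)) = a/2 * VV a x + a/2 * cos (c * x) * VV a x"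
    unfolding e using SS_cos_int[OF a] shiftL[OF a] shiftR[OF a] by simp
  have cont: "continuous_on UNIV (\<lambda>t. H a t * cos (t * x))"
    unfolding H_def by (intro continuous_intros) auto
  have even: "H a (- t) * cos (- t * x) = H a t * cos (t * x)" for t
  proof -
    have "(a * - t - pi) / 2 = - ((a * t + pi) / 2)" "(a * - t + pi) / 2 = - ((a * t - pi) / 2)"
      by (simp_all add: field_simps)
    then have "H a (- t) = H a t" unfolding H_def
      by (simp only: Dsinc_neg) (simp add: minus_divide_left[symmetric])
    then show ?thesis by simp
  qed
  show ?thesis using half_of_full[OF cont _ fi] even fv unfolding c_def by simp
qed


theorem lemmaA2:
  fixes \<alpha> :: real
  assumes "\<alpha> > 0"
  shows "(\<forall>x\<ge>0. (\<lambda>t. H \<alpha> t * cos (t * x)) integrable_on {0..})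
    \<and> (\<forall>x. x \<ge> 0 \<and> x > \<alpha> \<longrightarrow> G \<alpha> x = 0)
    \<and> G \<alpha> 0 = 1
    \<and> (\<forall>t::real. H \<alpha> t \<ge> 2 * \<alpha> / max ((\<alpha> * t)\<^sup>2) (pi\<^sup>2 / 3))"
proof (intro conjI allI impI)
  fix x :: real
  show "(\<lambda>t. H \<alpha> t * cos (t * x)) integrable_on {0..}"
    using H_cos_half[OF assms, of x] by blast
next
  fix x :: real
  assume x: "0 \<le> x \<and> \<alpha> < x"
  have "VV \<alpha> x = 0"
  proof -
    have "\<bar>x\<bar> = x" "\<bar>x + \<alpha>\<bar> = x + \<alpha>" "\<bar>x - \<alpha>\<bar> = x - \<alpha>" using x assms by auto
    then show ?thesis unfolding VV_def by (simp add: field_simps)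
  qed
  then have "integral {0..} (\<lambda>t. H \<alpha> t * cos (t * x)) = 0"
    using H_cos_half[OF assms, of x] by (simp add: integral_unique)
  then show "G \<alpha> x = 0" by (simp add: G_def)
next
  have v: "VV \<alpha> 0 = 2 * pi / \<alpha>"
    unfolding VV_def using assms by (simp add: field_simps power2_eq_square)
  have "integral {0..} (\<lambda>t. H \<alpha> t * cos (t * 0)) = pi"
    using H_cos_half[OF assms, of 0] v assms by (simp add: integral_unique)
  then show "G \<alpha> 0 = 1" by (simp add: G_def)
next
  fix t :: real
  show "H \<alpha> t \<ge> 2 * \<alpha> / max ((\<alpha> * t)\<^sup>2) (pi\<^sup>2 / 3)"
    by (rule H_bound[OF assms])
qed

end
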